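(* Suppose $\Phi(0)=0$ and $\Phi^*$ is strictly convex on $]0,\infty[$. Then for every $F\in\mathbb F_{\Phi^*}$ the function $x\mapsto\int_0^1\Phi^*(F^\leftarrow(u)+x)\,du-x$ has a unique minimizer on $\mathbb R$.
   Context: $\Phi:[0,\infty[\to[0,\infty]$ lower semicontinuous convex with $\Phi(0)<\infty$, $\Phi(x_0)<\infty$ for some $x_0>1$, $\inf_{x\ge0}\Phi(x)=0$, $\lim_{x\to\infty}\Phi(x)/x=\infty$; $\Phi^*(y)=\sup_{x\ge0}(xy-\Phi(x))$ is finite, convex, nondecreasing. On an atomless probability space, $H^{\Phi^*}=\{X:\mathbb E[\Phi^*(c|X|)]<\infty\ \forall c>0\}$, and $\mathbb F_{\Phi^*}$ is the set of distribution functions of random variables in $H^{\Phi^*}$; $F^\leftarrow$ is the left-continuous quantile function of $F$. *)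

theory Defs
  imports "HOL-Probability.Probability"
begin

definition ereal_convex_on :: "real set \<Rightarrow> (real \<Rightarrow> ereal) \<Rightarrow> bool" where
  "ereal_convex_on S f \<longleftrightarrow>
     (\<forall>x\<in>S. \<forall>y\<in>S. \<forall>t::real. 0 < t \<and> t < 1 \<longrightarrow>
        f ((1 - t) * x + t * y) \<le> ereal (1 - t) * f x + ereal t * f y)"

definition ereal_lsc_on :: "real set \<Rightarrow> (real \<Rightarrow> ereal) \<Rightarrow> bool" where
  "ereal_lsc_on S f \<longleftrightarrow>
     (\<forall>x\<in>S. \<forall>s::nat \<Rightarrow> real. (\<forall>n. s n \<in> S) \<and> s \<longlonglongrightarrow> x \<longrightarrow>
        f x \<le> liminf (\<lambda>n. f (s n)))"

definition strictly_convex_on :: "real set \<Rightarrow> (real \<Rightarrow> real) \<Rightarrow> bool" where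
  "strictly_convex_on S f \<longleftrightarrow>
     (\<forall>x\<in>S. \<forall>y\<in>S. \<forall>t::real. x \<noteq> y \<and> 0 < t \<and> t < 1 \<longrightarrow>
        f ((1 - t) * x + t * y) < (1 - t) * f x + t * f y)"

definition young_like :: "(real \<Rightarrow> ereal) \<Rightarrow> bool" where
  "young_like \<Phi> \<longleftrightarrow>
     (\<forall>x\<ge>0. \<Phi> x \<ge> 0) \<and>
     ereal_lsc_on {0..} \<Phi> \<and> ereal_convex_on {0..} \<Phi> \<and>
     \<Phi> 0 < \<infinity> \<and> (\<exists>x0>1. \<Phi> x0 < \<infinity>) \<and>
     (INF x\<in>{0..}. \<Phi> x) = 0 \<and>
     ((\<lambda>x. \<Phi> x / ereal x) \<longlongrightarrow> \<infinity>) at_top"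

(* Convex conjugate Phi^*(y) = sup_{x>=0} (x y - Phi x); finite under the standing assumptions *)
definition conj :: "(real \<Rightarrow> ereal) \<Rightarrow> real \<Rightarrow> real" where
  "conj \<Phi> y = real_of_ereal (SUP x\<in>{0..}. ereal (x * y) - \<Phi> x)"

definition atomless :: "'a measure \<Rightarrow> bool" where
  "atomless M \<longleftrightarrow> (\<forall>A\<in>sets M. measure M A > 0 \<longrightarrow>
      (\<exists>B\<in>sets M. B \<subseteq> A \<and> 0 < measure M B \<and> measure M B < measure M A))"

definition H_conj :: "(real \<Rightarrow> ereal) \<Rightarrow> 'a measure \<Rightarrow> ('a \<Rightarrow> real) \<Rightarrow> bool" where
  "H_conj \<Phi> M X \<longleftrightarrow> X \<in> borel_measurable M \<and>
     (\<forall>c>0. integrable M (\<lambda>\<omega>. conj \<Phi> (c * \<bar>X \<omega>\<bar>)))"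

definition distfun :: "'a measure \<Rightarrow> ('a \<Rightarrow> real) \<Rightarrow> real \<Rightarrow> real" where
  "distfun M X = cdf (distr M borel X)"

definition F_conj :: "(real \<Rightarrow> ereal) \<Rightarrow> 'a measure \<Rightarrow> (real \<Rightarrow> real) set" where
  "F_conj \<Phi> M = {distfun M X | X. H_conj \<Phi> M X}"

definition lquantile :: "(real \<Rightarrow> real) \<Rightarrow> real \<Rightarrow> real" where
  "lquantile F u = Inf {x. u \<le> F x}"

end

theory Submission
  imports Defs
begin


lemma transfer:
  fixes M :: "'a measure" and X :: "'a \<Rightarrow> real" and h :: "real \<Rightarrow> real"
  assumes "prob_space M" and X[measurable]: "X \<in> borel_measurable M" and h[measurable]: "h \<in> borel_measurable borel"
  shows "(\<integral>u\<in>{0<..<1}. h (lquantile (distfun M X) u) \<partial>lborel) = (\<integral>\<omega>. h (X \<omega>) \<partial>M)"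
proof -
  let ?N = "distr M borel X"
  let ?\<Omega> = "restrict_space lborel {0<..<1::real}"
  interpret P: prob_space M by fact
  have rd: "real_distribution ?N" by simp
  interpret C: cdf_distribution ?N by (rule cdf_distribution.intro[OF rd])
  have q: "lquantile (distfun M X) = C.I"
    by (auto simp: lquantile_def distfun_def fun_eq_iff)
  have Im: "C.I \<in> measurable ?\<Omega> borel"
    using C.measurable_CI by (simp add: measurable_def space_restrict_space sets_restrict_space)
  have "(\<integral>u\<in>{0<..<1}. h (C.I u) \<partial>lborel) = integral\<^sup>L ?\<Omega> (\<lambda>u. h (C.I u))"
    by (simp add: integral_restrict_space set_lebesgue_integral_def)
  also have "\<dots> = integral\<^sup>L (distr ?\<Omega> borel C.I) h"
    by (rule integral_distr[symmetric, OF Im h])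
  also have "\<dots> = integral\<^sup>L ?N h" using C.distr_I_eq_M by simp
  also have "\<dots> = (\<integral>\<omega>. h (X \<omega>) \<partial>M)" by (rule integral_distr) auto
  finally show ?thesis using q by simp
qed


lemma conj_fin:
  assumes Y: "young_like \<Phi>" and P0: "\<Phi> 0 = 0"
  shows "ereal (conj \<Phi> y) = (SUP x\<in>{0..}. ereal (x * y) - \<Phi> x)"
proof -
  let ?S = "(SUP x\<in>{0..}. ereal (x * y) - \<Phi> x)"
  have nn: "\<And>x. x \<ge> 0 \<Longrightarrow> \<Phi> x \<ge> 0" using Y by (auto simp: young_like_def)
  have lim: "((\<lambda>x. \<Phi> x / ereal x) \<longlongrightarrow> \<infinity>) at_top" using Y by (auto simp: young_like_def)
  have "eventually (\<lambda>x. ereal y < \<Phi> x / ereal x) at_top"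
    by (rule order_tendstoD(1)[OF lim]) simp
  then obtain R where R: "\<And>x. x \<ge> R \<Longrightarrow> ereal y < \<Phi> x / ereal x"
    by (auto simp: eventually_at_top_linorder)
  define R' where "R' = max R 1"
  have "?S \<le> ereal (R' * \<bar>y\<bar>)"
  proof (rule SUP_least)
    fix x :: real assume x: "x \<in> {0..}"
    show "ereal (x * y) - \<Phi> x \<le> ereal (R' * \<bar>y\<bar>)"
    proof (cases "\<Phi> x")
      case (real p)
      have p: "p \<ge> 0" using nn[of x] x real by auto
      show ?thesis
      proof (cases "x \<le> R'")
        case True
        have "x * y \<le> R' * \<bar>y\<bar>"
          by (metis True abs_ge_self abs_mult abs_of_nonneg atLeast_iff mult_mono' order.trans abs_ge_zero x)
        then show ?thesis using real p by simp
      next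
        case False
        then have "x \<ge> R" "x > 0" unfolding R'_def by auto
        from R[OF this(1)] real \<open>x > 0\<close> have "y < p / x" by simp
        then have "x * y < p" using \<open>x > 0\<close> by (simp add: field_simps)
        then show ?thesis using real p
          by (simp add: order_trans[of _ 0]) (smt (verit, best) abs_ge_zero False mult_nonneg_nonneg R'_def)
      qed
    next
      case PInf then show ?thesis by simp
    next
      case MInf then show ?thesis using nn[of x] x by simp
    qed
  qed
  moreover have "0 \<le> ?S"
    by (rule SUP_upper2[of 0]) (auto simp: P0)
  ultimately have "\<bar>?S\<bar> \<noteq> \<infinity>" by auto
  then show ?thesis unfolding conj_def by (simp add: ereal_real')
qed

lemma conj_upper:
  assumes Y: "young_like \<Phi>" and P0: "\<Phi> 0 = 0" and x: "x \<ge> 0" and p: "\<Phi> x = ereal p"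
  shows "x * y - p \<le> conj \<Phi> y"
proof -
  have "ereal (x * y) - \<Phi> x \<le> (SUP x\<in>{0..}. ereal (x * y) - \<Phi> x)"
    by (rule SUP_upper) (use x in auto)
  then have "ereal (x * y - p) \<le> ereal (conj \<Phi> y)" using conj_fin[OF Y P0, of y] p by simp
  then show ?thesis by simp
qed

lemma conj_least:
  assumes Y: "young_like \<Phi>" and P0: "\<Phi> 0 = 0"
    and B: "\<And>x p. x \<ge> 0 \<Longrightarrow> \<Phi> x = ereal p \<Longrightarrow> x * y - p \<le> B"
  shows "conj \<Phi> y \<le> B"
proof -
  have nn: "\<And>x. x \<ge> 0 \<Longrightarrow> \<Phi> x \<ge> 0" using Y by (auto simp: young_like_def)
  have "(SUP x\<in>{0..}. ereal (x * y) - \<Phi> x) \<le> ereal B"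
  proof (rule SUP_least)
    fix x :: real assume x: "x \<in> {0..}"
    show "ereal (x * y) - \<Phi> x \<le> ereal B"
      using B[of x] nn[of x] x by (cases "\<Phi> x") auto
  qed
  then have "ereal (conj \<Phi> y) \<le> ereal B" using conj_fin[OF Y P0, of y] by simp
  then show ?thesis by simp
qed



context
  fixes \<Phi> :: "real \<Rightarrow> ereal"
  assumes Y: "young_like \<Phi>" and P0: "\<Phi> 0 = 0"
begin

lemma Phi_nn: "x \<ge> 0 \<Longrightarrow> \<Phi> x = ereal p \<Longrightarrow> p \<ge> 0"
  using Y by (auto simp: young_like_def)

lemma c_nonneg: "0 \<le> conj \<Phi> y"
  using conj_upper[OF Y P0, of 0 0 y] P0 by (simp add: zero_ereal_def)

lemma c_nonpos: "y \<le> 0 \<Longrightarrow> conj \<Phi> y = 0"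
proof -
  assume y: "y \<le> 0"
  have "conj \<Phi> y \<le> 0"
  proof (rule conj_least[OF Y P0])
    fix x p assume "0 \<le> x" "\<Phi> x = ereal p"
    then show "x * y - p \<le> 0" using Phi_nn y by (smt (verit) mult_nonneg_nonpos)
  qed
  then show ?thesis using c_nonneg[of y] by simp
qed

lemma c_mono: "y1 \<le> y2 \<Longrightarrow> conj \<Phi> y1 \<le> conj \<Phi> y2"
proof (rule conj_least[OF Y P0])
  fix x p assume "y1 \<le> y2" "0 \<le> x" "\<Phi> x = ereal p"
  then have "x * y1 - p \<le> x * y2 - p" by (simp add: mult_left_mono)
  also have "\<dots> \<le> conj \<Phi> y2" by (rule conj_upper[OF Y P0]) fact+
  finally show "x * y1 - p \<le> conj \<Phi> y2" .
qed

lemma c_lower: "\<exists>a b. a > 1 \<and> (\<forall>y. a * y - b \<le> conj \<Phi> y)"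
proof -
  obtain x0 where x0: "x0 > 1" "\<Phi> x0 < \<infinity>" using Y by (auto simp: young_like_def)
  have "\<Phi> x0 \<ge> 0" using Y x0 by (auto simp: young_like_def)
  then obtain p where p: "\<Phi> x0 = ereal p" using x0 by (cases "\<Phi> x0") auto
  show ?thesis using conj_upper[OF Y P0 _ p] x0 by (intro exI[of _ x0] exI[of _ p]) auto
qed

lemma c_convex: "convex_on UNIV (conj \<Phi>)"
proof (rule convex_onI)
  fix t a b :: real assume t: "0 < t" "t < 1"
  show "conj \<Phi> ((1 - t) *\<^sub>R a + t *\<^sub>R b) \<le> (1 - t) * conj \<Phi> a + t * conj \<Phi> b"
  proof (rule conj_least[OF Y P0])
    fix x p assume x: "0 \<le> x" "\<Phi> x = ereal p"
    have "x * ((1 - t) *\<^sub>R a + t *\<^sub>R b) - p = (1 - t) * (x * a - p) + t * (x * b - p)"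
      by (simp add: algebra_simps)
    also have "\<dots> \<le> (1 - t) * conj \<Phi> a + t * conj \<Phi> b"
      using conj_upper[OF Y P0 x, of a] conj_upper[OF Y P0 x, of b] t
      by (intro add_mono mult_left_mono) auto
    finally show "x * ((1 - t) *\<^sub>R a + t *\<^sub>R b) - p \<le> (1 - t) * conj \<Phi> a + t * conj \<Phi> b" .
  qed
qed auto

lemma c_cont: "continuous_on UNIV (conj \<Phi>)"
  by (rule convex_on_continuous[OF _ c_convex]) auto

lemma c_meas[measurable]: "conj \<Phi> \<in> borel_measurable borel"
  using c_cont by (simp add: borel_measurable_continuous_onI)

lemma c_conv2: "conj \<Phi> ((1 - t) * a + t * b) \<le> (1 - t) * conj \<Phi> a + t * conj \<Phi> b"
  if "0 \<le> t" "t \<le> 1"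
  using convex_onD[OF c_convex, of t a b] that by simp

context
  assumes SC: "strictly_convex_on {0<..} (conj \<Phi>)"
begin

lemma c_half: "b > 0 \<Longrightarrow> conj \<Phi> (b / 2) < conj \<Phi> b / 2"
proof -
  assume b: "b > 0"
  have "conj \<Phi> ((1 - 1/3) * (b/4) + (1/3) * b) < (1 - 1/3) * conj \<Phi> (b/4) + (1/3) * conj \<Phi> b"
    using SC b unfolding strictly_convex_on_def
    by (intro SC[unfolded strictly_convex_on_def, rule_format]) auto
  moreover have "(1 - 1/3) * (b/4) + (1/3) * b = b / 2" by simp
  moreover have "conj \<Phi> ((1 - 1/4) * 0 + (1/4) * b) \<le> (1 - 1/4) * conj \<Phi> 0 + (1/4) * conj \<Phi> b"
    by (rule c_conv2) auto
  ultimately show ?thesis using c_nonpos[of 0] by simp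
qed

lemma c_mid: "a < b \<Longrightarrow> b > 0 \<Longrightarrow> conj \<Phi> ((a + b) / 2) < (conj \<Phi> a + conj \<Phi> b) / 2"
proof -
  assume ab: "a < b" "b > 0"
  show ?thesis
  proof (cases "a > 0")
    case True
    have "conj \<Phi> ((1 - 1/2) * a + (1/2) * b) < (1 - 1/2) * conj \<Phi> a + (1/2) * conj \<Phi> b"
      using ab True by (intro SC[unfolded strictly_convex_on_def, rule_format]) auto
    then show ?thesis by (simp add: field_simps)
  next
    case False
    then have "conj \<Phi> ((a + b) / 2) \<le> conj \<Phi> (b / 2)" by (intro c_mono) simp
    also have "\<dots> < conj \<Phi> b / 2" using c_half ab by simp
    finally show ?thesis using c_nonpos[of a] False by simp
  qed
qed

end
end


theorem propositionA2:
  fixes \<Phi> :: "real \<Rightarrow> ereal" and M :: "'a measure" and F :: "real \<Rightarrow> real"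
  assumes "young_like \<Phi>"
    and "prob_space M" and "atomless M"
    and "\<Phi> 0 = 0"
    and "strictly_convex_on {0<..} (conj \<Phi>)"
    and "F \<in> F_conj \<Phi> M"
  shows "\<exists>!x::real. \<forall>y::real.
     (\<integral>u\<in>{0<..<1}. conj \<Phi> (lquantile F u + x) \<partial>lborel) - x
       \<le> (\<integral>u\<in>{0<..<1}. conj \<Phi> (lquantile F u + y) \<partial>lborel) - y"
proof -
  note Y = assms(1) and P0 = assms(4) and SC = assms(5)
  interpret P: prob_space M by fact
  let ?c = "conj \<Phi>"
  note cm[measurable] = c_meas[OF Y P0]
  obtain X where H: "H_conj \<Phi> M X" and F: "F = distfun M X"
    using assms(6) unfolding F_conj_def by auto
  have Xm[measurable]: "X \<in> borel_measurable M" using H by (simp add: H_conj_def)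
  have Hc: "\<And>k. k > 0 \<Longrightarrow> integrable M (\<lambda>\<omega>. ?c (k * \<bar>X \<omega>\<bar>))" using H by (simp add: H_conj_def)
  define g where "g x = (\<integral>\<omega>. ?c (X \<omega> + x) \<partial>M)" for x
  have tr: "(\<integral>u\<in>{0<..<1}. ?c (lquantile F u + x) \<partial>lborel) = g x" for x
    unfolding F g_def by (rule transfer[OF assms(2) Xm]) simp
  have int: "integrable M (\<lambda>\<omega>. ?c (X \<omega> + x))" for x
  proof (rule Bochner_Integration.integrable_bound)
    show "integrable M (\<lambda>\<omega>. (?c (2 * \<bar>X \<omega>\<bar>) + ?c (2 * \<bar>x\<bar>)) / 2)"
      using Hc[of 2] by simp
    show "AE \<omega> in M. norm (?c (X \<omega> + x)) \<le> norm ((?c (2 * \<bar>X \<omega>\<bar>) + ?c (2 * \<bar>x\<bar>)) / 2)"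
    proof (intro AE_I2)
      fix \<omega>
      have "?c (X \<omega> + x) \<le> ?c ((1 - 1/2) * (2 * \<bar>X \<omega>\<bar>) + (1/2) * (2 * \<bar>x\<bar>))"
        by (intro c_mono[OF Y P0]) auto
      also have "\<dots> \<le> (1 - 1/2) * ?c (2 * \<bar>X \<omega>\<bar>) + (1/2) * ?c (2 * \<bar>x\<bar>)"
        by (rule c_conv2[OF Y P0]) auto
      finally show "norm (?c (X \<omega> + x)) \<le> norm ((?c (2 * \<bar>X \<omega>\<bar>) + ?c (2 * \<bar>x\<bar>)) / 2)"
        using c_nonneg[OF Y P0, of "X \<omega> + x"] c_nonneg[OF Y P0, of "2 * \<bar>X \<omega>\<bar>"]
          c_nonneg[OF Y P0, of "2 * \<bar>x\<bar>"] by simp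
    qed
  qed simp
  obtain a b where ab: "a > 1" "\<And>y. a * y - b \<le> ?c y" using c_lower[OF Y P0] by blast
  have intX: "integrable M X"
  proof (rule Bochner_Integration.integrable_bound)
    show "integrable M (\<lambda>\<omega>. (?c (1 * \<bar>X \<omega>\<bar>) + b) / a)" using Hc[of 1] by simp
    show "AE \<omega> in M. norm (X \<omega>) \<le> norm ((?c (1 * \<bar>X \<omega>\<bar>) + b) / a)"
    proof (intro AE_I2)
      fix \<omega>
      have "a * \<bar>X \<omega>\<bar> - b \<le> ?c \<bar>X \<omega>\<bar>" by (rule ab)
      then have "\<bar>X \<omega>\<bar> \<le> (?c \<bar>X \<omega>\<bar> + b) / a" using ab(1) by (simp add: field_simps)
      moreover have "(?c \<bar>X \<omega>\<bar> + b) / a \<le> \<bar>?c \<bar>X \<omega>\<bar> + b\<bar> / \<bar>a\<bar>"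
        using ab(1) by (simp add: divide_right_mono)
      ultimately show "norm (X \<omega>) \<le> norm ((?c (1 * \<bar>X \<omega>\<bar>) + b) / a)"
        using ab(1) by simp
    qed
  qed simp
  define EXm where "EXm = (\<integral>\<omega>. X \<omega> \<partial>M)"
  have g_nn: "g x \<ge> 0" for x unfolding g_def by (intro integral_nonneg_AE) (simp add: c_nonneg[OF Y P0])
  have g_low: "a * (EXm + x) - b \<le> g x" for x
  proof -
    have "(\<integral>\<omega>. a * (X \<omega> + x) - b \<partial>M) \<le> g x"
      unfolding g_def using intX int[of x] ab(2) by (intro integral_mono) auto
    moreover have "(\<integral>\<omega>. a * (X \<omega> + x) - b \<partial>M) = a * (EXm + x) - b"
      using intX by (simp add: EXm_def algebra_simps P.prob_space)
    ultimately show ?thesis by simp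
  qed
  have g_conv: "g ((1 - t) * x + t * y) \<le> (1 - t) * g x + t * g y" if t: "0 \<le> t" "t \<le> 1" for t x y
  proof -
    have "g ((1 - t) * x + t * y) \<le> (\<integral>\<omega>. (1 - t) * ?c (X \<omega> + x) + t * ?c (X \<omega> + y) \<partial>M)"
      unfolding g_def
    proof (intro integral_mono)
      fix \<omega>
      have "X \<omega> + ((1 - t) * x + t * y) = (1 - t) * (X \<omega> + x) + t * (X \<omega> + y)" by (simp add: algebra_simps)
      then show "?c (X \<omega> + ((1 - t) * x + t * y)) \<le> (1 - t) * ?c (X \<omega> + x) + t * ?c (X \<omega> + y)"
        using c_conv2[OF Y P0 t] by simp
    qed (use int in auto)
    also have "\<dots> = (1 - t) * g x + t * g y" unfolding g_def using int[of x] int[of y] by simp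
    finally show ?thesis .
  qed
  have gconv: "convex_on UNIV g"
    by (rule convex_onI) (use g_conv in auto)
  have gcont: "continuous_on UNIV g" by (rule convex_on_continuous[OF _ gconv]) auto
  define G where "G x = g x - x" for x
  have Gcont: "continuous_on UNIV G" unfolding G_def by (intro continuous_intros gcont)
  define m where "m = G 0"
  define R where "R = \<bar>m\<bar> + \<bar>(m - a * EXm + b) / (a - 1)\<bar>"
  have Rge: "R \<ge> \<bar>m\<bar>" "R \<ge> \<bar>(m - a * EXm + b) / (a - 1)\<bar>" unfolding R_def by auto
  have out: "G y > m" if "y \<notin> {-R..R}" for y
  proof (cases "y < 0")
    case True
    then have "y < - \<bar>m\<bar>" using that Rge by auto
    then show ?thesis using g_nn[of y] unfolding G_def by linarith
  next
    case False
    then have "y > (m - a * EXm + b) / (a - 1)" using that Rge(2) abs_ge_self[of "(m - a * EXm + b) / (a - 1)"]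
      by (simp del: abs_divide) linarith
    then have "(a - 1) * y > m - a * EXm + b" using ab(1) by (simp add: field_simps)
    then show ?thesis using g_low[of y] unfolding G_def by (simp add: algebra_simps)
  qed
  obtain x where x: "x \<in> {-R..R}" "\<And>y. y \<in> {-R..R} \<Longrightarrow> G x \<le> G y"
    using continuous_attains_inf[of "{-R..R}" G] continuous_on_subset[OF Gcont]
    by (auto simp: R_def)
  have xmin: "G x \<le> G y" for y
  proof (cases "y \<in> {-R..R}")
    case True then show ?thesis using x by auto
  next
    case False
    have "0 \<in> {-R..R}" using Rge(1) by auto
    then have "G x \<le> m" using x unfolding m_def by auto
    then show ?thesis using out[OF False] by simp
  qed
  have uniq: False if "x1 < x2" "\<And>y. G x1 \<le> G y" "\<And>y. G x2 \<le> G y" for x1 x2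
  proof -
    define xm where "xm = (x1 + x2) / 2"
    have "G xm \<ge> G x1" "G x1 = G x2" using that by (auto intro: antisym)
    then have ge: "g xm \<ge> (g x1 + g x2) / 2" unfolding G_def xm_def by (simp add: field_simps)
    define f where "f \<omega> = (?c (X \<omega> + x1) + ?c (X \<omega> + x2)) / 2 - ?c (X \<omega> + xm)" for \<omega>
    have fint: "integrable M f" unfolding f_def using int by auto
    have fnn: "0 \<le> f \<omega>" for \<omega>
    proof -
      have "X \<omega> + xm = (1 - 1/2) * (X \<omega> + x1) + (1/2) * (X \<omega> + x2)" by (simp add: xm_def field_simps)
      then have "?c (X \<omega> + xm) \<le> (1 - 1/2) * ?c (X \<omega> + x1) + (1/2) * ?c (X \<omega> + x2)"
        using c_conv2[OF Y P0, of "1/2"] by simp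
      then show ?thesis unfolding f_def by simp
    qed
    have "integral\<^sup>L M f = (g x1 + g x2) / 2 - g xm"
      unfolding f_def g_def using int by simp
    then have "integral\<^sup>L M f = 0" using ge integral_nonneg_AE[of f M] fnn by auto
    then have "AE \<omega> in M. f \<omega> = 0" using integral_nonneg_eq_0_iff_AE[OF fint] fnn by auto
    then have ae: "AE \<omega> in M. X \<omega> + x2 \<le> 0"
    proof (rule AE_mp, intro AE_I2 impI)
      fix \<omega> assume f0: "f \<omega> = 0"
      show "X \<omega> + x2 \<le> 0"
      proof (rule ccontr)
        assume "\<not> X \<omega> + x2 \<le> 0"
        then have "?c (((X \<omega> + x1) + (X \<omega> + x2)) / 2) < (?c (X \<omega> + x1) + ?c (X \<omega> + x2)) / 2"
          using that(1) by (intro c_mid[OF Y P0 SC]) auto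
        moreover have "((X \<omega> + x1) + (X \<omega> + x2)) / 2 = X \<omega> + xm" by (simp add: xm_def)
        ultimately have "?c (X \<omega> + xm) < (?c (X \<omega> + x1) + ?c (X \<omega> + x2)) / 2" by metis
        then show False using f0 unfolding f_def by linarith
      qed
    qed
    have "g x1 = 0" unfolding g_def
      using ae that(1) by (subst integral_cong_AE[where g = "\<lambda>_. 0"]) (auto elim!: AE_mp intro!: c_nonpos[OF Y P0])
    moreover have "g x2 = 0" unfolding g_def
      using ae by (subst integral_cong_AE[where g = "\<lambda>_. 0"]) (auto elim!: AE_mp intro!: c_nonpos[OF Y P0])
    ultimately show False using that unfolding G_def by (smt (verit))
  qed
  show ?thesis unfolding tr
  proof (rule ex1I[of _ x])
    show "\<forall>y. g x - x \<le> g y - y" using xmin unfolding G_def by auto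
  next
    fix z assume z: "\<forall>y. g z - z \<le> g y - y"
    show "z = x"
    proof (rule ccontr)
      assume "z \<noteq> x"
      then show False using uniq[of z x] uniq[of x z] z xmin unfolding G_def
        by (metis linorder_neqE_linordered_idom)
    qed
  qed
qed

end
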